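(* Assume the Hashimoto matrix $B$ is irreducible, $\mathbf{p}\in(0,1]^E$, and $\rho:=\rho\big(B^T\mathrm{diag}(\mathbf{p})\big)>1$. Then there exists $\mathbf{Q}\in[0,1]^E\setminus\{\mathbf{1}\}$ with $\mathbf{Q}=\mathbf{F}(\mathbf{Q};\mathbf{p})$.
   Context: $\mathcal{G}=(V,E)$ is a finite directed graph, edges written $i\to j$, $M=|E|$; $\mathcal{N}^-(j)=\{k:\,k\to j\in E\}$. The Hashimoto matrix is $B_{i\to j,\,k\to l}=\delta_{jk}(1-\delta_{il})$; irreducibility means the directed graph on $E$ with an arc $e\to e'$ whenever $B_{e,e'}\neq0$ is strongly connected. $\rho$ denotes spectral radius. For $\mathbf{p}\in[0,1]^E$, $\mathbf{F}(\cdot;\mathbf{p}):[0,1]^E\to[0,1]^E$ is defined componentwise: for the edge $j\to i$, $$F_{j\to i}(\mathbf{y};\mathbf{p})=\prod_{k\in\mathcal{N}^-(j)\setminus\{i\}}\big(1-p_{k\to j}+p_{k\to j}\,y_{k\to j}\big)$$ (empty product $=1$); its Jacobian at $\mathbf{1}$ is $B^T\mathrm{diag}(\mathbf{p})$. $\mathbf{1}$ is the all-ones vector, always a fixed point of $\mathbf{F}$. *)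

theory Defs
  imports Main "Jordan_Normal_Form.Spectral_Radius"
begin

(* Directed graph: edges are pairs (i,j) meaning i -> j. Vectors indexed by E are
   functions on 'v \<times> 'v (values outside E are irrelevant). *)

definition in_nbrs :: "('v \<times> 'v) set \<Rightarrow> 'v \<Rightarrow> 'v set" where
  "in_nbrs E j = {k. (k, j) \<in> E}"

definition hashimoto :: "('v \<times> 'v) \<Rightarrow> ('v \<times> 'v) \<Rightarrow> real" where
  "hashimoto e f = (if snd e = fst f \<and> fst e \<noteq> snd f then 1 else 0)"

definition hashimoto_irreducible :: "('v \<times> 'v) set \<Rightarrow> bool" where
  "hashimoto_irreducible E \<longleftrightarrow>
     (\<forall>e\<in>E. \<forall>e'\<in>E. (e, e') \<in> {(a, b). a \<in> E \<and> b \<in> E \<and> hashimoto a b \<noteq> 0}\<^sup>*)"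

(* The matrix B^T diag(p), with rows/columns indexed by E via an enumeration es of E
   (es distinct, set es = E); as a complex matrix for the library spectral radius. *)
definition BT_diag_mat :: "('v \<times> 'v) list \<Rightarrow> ('v \<times> 'v \<Rightarrow> real) \<Rightarrow> complex mat" where
  "BT_diag_mat es p = mat (length es) (length es)
     (\<lambda>(a, b). complex_of_real (hashimoto (es ! b) (es ! a) * p (es ! b)))"

definition Fmap :: "('v \<times> 'v) set \<Rightarrow> ('v \<times> 'v \<Rightarrow> real) \<Rightarrow> ('v \<times> 'v \<Rightarrow> real) \<Rightarrow> ('v \<times> 'v \<Rightarrow> real)" where
  "Fmap E p y = (\<lambda>(j, i). \<Prod>k\<in>in_nbrs E j - {i}. (1 - p (k, j) + p (k, j) * y (k, j)))"

end

theory Submission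
  imports Defs
begin

lemma prod_bound:
  fixes a :: "'a \<Rightarrow> real"
  assumes "finite K" "\<forall>k\<in>K. 0 \<le> a k \<and> a k \<le> 1"
  shows "(\<Prod>k\<in>K. 1 - a k) * (1 + (\<Sum>k\<in>K. a k)) \<le> 1 \<and> 0 \<le> (\<Prod>k\<in>K. 1 - a k) \<and> (\<Prod>k\<in>K. 1 - a k) \<le> 1"
  using assms
proof (induction K rule: finite_induct)
  case empty then show ?case by simp
next
  case (insert x F)
  define P where "P = (\<Prod>k\<in>F. 1 - a k)"
  define s where "s = (\<Sum>k\<in>F. a k)"
  have IH: "P*(1+s) \<le> 1" "0 \<le> P" "P \<le> 1" using insert unfolding P_def s_def by auto
  have ax: "0 \<le> a x" "a x \<le> 1" using insert by auto
  have "(1 - a x) * P * (1 + (a x + s)) = (1 - a x) * (P*(1+s) + a x * P)" by (simp add: algebra_simps)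
  also have "\<dots> \<le> (1 - a x) * (1 + a x * 1)" using IH ax
    by (intro mult_left_mono add_mono) auto
  also have "\<dots> \<le> 1" using ax by (simp add: algebra_simps)
  finally have "(1 - a x) * P * (1 + (a x + s)) \<le> 1" .
  moreover have "0 \<le> (1 - a x) * P" "(1 - a x) * P \<le> 1" using IH ax
    by (auto simp: mult_le_one)
  ultimately show ?case using insert unfolding P_def s_def by simp
qed

lemma in_nbrsD: "k \<in> in_nbrs E j \<Longrightarrow> (k, j) \<in> E"
  by (simp add: in_nbrs_def)

lemma Fmap_range:
  assumes "\<forall>e\<in>E. 0 \<le> p e \<and> p e \<le> 1" "\<forall>e\<in>E. 0 \<le> y e \<and> y e \<le> 1"
  shows "0 \<le> Fmap E p y e \<and> Fmap E p y e \<le> 1"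
proof (cases e)
  case (Pair j i)
  have f: "0 \<le> 1 - p (k, j) + p (k, j) * y (k, j) \<and> 1 - p (k, j) + p (k, j) * y (k, j) \<le> 1"
    if "k \<in> in_nbrs E j - {i}" for k
  proof -
    have "(k, j) \<in> E" using that by (simp add: in_nbrs_def)
    then have h: "0 \<le> p (k,j)" "p (k,j) \<le> 1" "0 \<le> y (k,j)" "y (k,j) \<le> 1" using assms by auto
    have "p (k,j) * y (k,j) \<le> p (k,j)" using h by (simp add: mult_left_le)
    moreover have "0 \<le> p (k,j) * y (k,j)" using h by simp
    ultimately show ?thesis using h by linarith
  qed
  have eq: "Fmap E p y e = (\<Prod>k\<in>in_nbrs E j - {i}. 1 - p (k, j) + p (k, j) * y (k, j))"
    unfolding Pair Fmap_def by simp
  show ?thesis unfolding eq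
  proof
    show "0 \<le> (\<Prod>k\<in>in_nbrs E j - {i}. 1 - p (k, j) + p (k, j) * y (k, j))"
      by (rule prod_nonneg) (use f in blast)
    show "(\<Prod>k\<in>in_nbrs E j - {i}. 1 - p (k, j) + p (k, j) * y (k, j)) \<le> 1"
      by (rule prod_le_1) (use f in blast)
  qed
qed

lemma Fmap_mono:
  assumes "\<forall>e\<in>E. 0 \<le> p e \<and> p e \<le> 1" "\<forall>e\<in>E. 0 \<le> y e \<and> y e \<le> z e"
  shows "Fmap E p y e \<le> Fmap E p z e"
proof (cases e)
  case (Pair j i)
  have f: "0 \<le> 1 - p (k, j) + p (k, j) * y (k, j) \<and> 1 - p (k, j) + p (k, j) * y (k, j) \<le> 1 - p (k, j) + p (k, j) * z (k, j)"
    if "k \<in> in_nbrs E j - {i}" for k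
  proof -
    have "(k, j) \<in> E" using that by (simp add: in_nbrs_def)
    then have h: "0 \<le> p (k,j)" "p (k,j) \<le> 1" "0 \<le> y (k,j)" "y (k,j) \<le> z (k,j)" using assms by auto
    have "p (k,j) * y (k,j) \<le> p (k,j) * z (k,j)" using h by (simp add: mult_left_mono)
    moreover have "0 \<le> p (k,j) * y (k,j)" using h by simp
    ultimately show ?thesis using h by linarith
  qed
  have eq: "Fmap E p w e = (\<Prod>k\<in>in_nbrs E j - {i}. 1 - p (k, j) + p (k, j) * w (k, j))" for w
    unfolding Pair Fmap_def by simp
  show ?thesis unfolding eq
    by (rule prod_mono) (use f in blast)
qed

lemma finite_in_nbrs: "finite E \<Longrightarrow> finite (in_nbrs E j)"
proof -
  assume "finite E"
  have "in_nbrs E j \<subseteq> fst ` E" unfolding in_nbrs_def by force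
  then show ?thesis using \<open>finite E\<close> finite_subset by blast
qed

lemma hsum:
  fixes g :: "'v \<times> 'v \<Rightarrow> real"
  assumes "finite E"
  shows "(\<Sum>f\<in>E. hashimoto f (j,i) * g f) = (\<Sum>k\<in>in_nbrs E j - {i}. g (k,j))"
proof -
  have "(\<Sum>f\<in>E. hashimoto f (j,i) * g f) = (\<Sum>f\<in>E. if snd f = j \<and> fst f \<noteq> i then g f else 0)"
    by (intro sum.cong) (auto simp: hashimoto_def)
  also have "\<dots> = sum g {f\<in>E. snd f = j \<and> fst f \<noteq> i}"
    using assms by (simp add: sum.inter_filter)
  also have "{f\<in>E. snd f = j \<and> fst f \<noteq> i} = (\<lambda>k. (k,j)) ` (in_nbrs E j - {i})"
    unfolding in_nbrs_def by force
  also have "sum g \<dots> = (\<Sum>k\<in>in_nbrs E j - {i}. g (k,j))"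
    by (subst sum.reindex) (auto simp: inj_on_def)
  finally show ?thesis .
qed

theorem theorem1:
  fixes V :: "'v set" and E :: "('v \<times> 'v) set" and es :: "('v \<times> 'v) list"
    and p :: "'v \<times> 'v \<Rightarrow> real"
  assumes "finite V" and "E \<subseteq> V \<times> V" and "E \<noteq> {}"
    and "distinct es" and "set es = E"
    and "hashimoto_irreducible E"
    and "\<forall>e\<in>E. 0 < p e \<and> p e \<le> 1"
    and "spectral_radius (BT_diag_mat es p) > 1"
  shows "\<exists>Q :: 'v \<times> 'v \<Rightarrow> real.
           (\<forall>e\<in>E. 0 \<le> Q e \<and> Q e \<le> 1) \<and> (\<exists>e\<in>E. Q e \<noteq> 1) \<and>
           (\<forall>e\<in>E. Q e = Fmap E p Q e)"
proof -
  let ?n = "length es"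
  define A where "A = BT_diag_mat es p"
  have finE: "finite E" using assms(5) by auto
  have pE: "\<forall>e\<in>E. 0 \<le> p e \<and> p e \<le> 1" using assms(7) by auto
  have Acar: "A \<in> carrier_mat ?n ?n" by (simp add: A_def BT_diag_mat_def)
  have n0: "?n > 0" using assms(3,5) by (cases es) auto
  obtain v c where vc: "v \<in> carrier_vec ?n" "norm c > 1" "v \<noteq> 0\<^sub>v ?n" "A ^\<^sub>m 1 *\<^sub>v v = c^1 \<cdot>\<^sub>v v"
    using spectral_radius_gt_1[OF Acar n0, of 1] assms(8) A_def by blast
  have Av: "A *\<^sub>v v = c \<cdot>\<^sub>v v" using vc(4) Acar by simp
  have eig: "c * v$a = (\<Sum>b<?n. complex_of_real (hashimoto (es!b) (es!a) * p (es!b)) * v$b)"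
    if "a < ?n" for a
  proof -
    have "(A *\<^sub>v v) $ a = (c \<cdot>\<^sub>v v) $ a" using Av by simp
    then show ?thesis using that vc(1) Acar unfolding A_def BT_diag_mat_def
      by (simp add: scalar_prod_def row_def lessThan_atLeast0)
  qed
  define r where "r = norm c"
  define wa where "wa a = norm (v$a)" for a
  have sub: "r * wa a \<le> (\<Sum>b<?n. hashimoto (es!b) (es!a) * p (es!b) * wa b)" if "a < ?n" for a
  proof -
    have "r * wa a = norm (c * v$a)" by (simp add: r_def wa_def norm_mult)
    also have "\<dots> = norm (\<Sum>b<?n. complex_of_real (hashimoto (es!b) (es!a) * p (es!b)) * v$b)"
      using eig that by simp
    also have "\<dots> \<le> (\<Sum>b<?n. norm (complex_of_real (hashimoto (es!b) (es!a) * p (es!b)) * v$b))"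
      by (rule norm_sum)
    also have "\<dots> = (\<Sum>b<?n. hashimoto (es!b) (es!a) * p (es!b) * wa b)"
    proof (rule sum.cong[OF refl])
      fix b assume "b \<in> {..<?n}"
      then have "es!b \<in> E" using assms(5) by auto
      then have "0 \<le> p (es!b)" using pE by auto
      moreover have "0 \<le> hashimoto (es!b) (es!a)" by (simp add: hashimoto_def)
      ultimately show "norm (complex_of_real (hashimoto (es!b) (es!a) * p (es!b)) * v$b)
          = hashimoto (es!b) (es!a) * p (es!b) * wa b" by (simp add: norm_mult wa_def)
    qed
    finally show ?thesis .
  qed
  obtain a0 where a0: "a0 < ?n" "v$a0 \<noteq> 0"
  proof -
    have "\<exists>a<?n. v$a \<noteq> 0"
    proof (rule ccontr)
      assume "\<not> ?thesis"
      then have "v = 0\<^sub>v ?n" using vc(1) by (intro eq_vecI) auto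
      then show False using vc(3) by simp
    qed
    then show ?thesis using that by blast
  qed
  define m where "m = Max (wa ` {..<?n})"
  have wa_le: "wa a \<le> m" if "a < ?n" for a using that by (simp add: m_def)
  have m0: "0 < m" using wa_le[OF a0(1)] a0(2) unfolding wa_def
    by (meson less_le_trans zero_less_norm_iff)
  define idx where "idx f = (SOME a. a < ?n \<and> es!a = f)" for f
  have idx1: "idx f < ?n \<and> es!(idx f) = f" if "f \<in> E" for f
  proof -
    have "\<exists>a. a < ?n \<and> es!a = f" using that assms(5) by (auto simp: in_set_conv_nth)
    then show ?thesis unfolding idx_def by (rule someI_ex)
  qed
  have idx2: "idx (es!b) = b" if "b < ?n" for b
    using idx1[of "es!b"] that assms(4,5) nth_eq_iff_index_eq nth_mem by metis
  define W where "W f = wa (idx f) / m" for f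
  have W01: "0 \<le> W f \<and> W f \<le> 1" if "f \<in> E" for f
    using idx1[OF that] wa_le[of "idx f"] m0 by (auto simp: W_def wa_def)
  have a0E: "es!a0 \<in> E" using a0 assms(5) by auto
  have Wpos: "W (es!a0) > 0" using a0 m0 by (simp add: W_def idx2 wa_def)
  have bij: "bij_betw (nth es) {..<?n} E" using bij_betw_nth[OF assms(4)] assms(5) by auto
  have subW: "r * W e \<le> (\<Sum>f\<in>E. hashimoto f e * (p f * W f))" if "e \<in> E" for e
  proof -
    have eE: "e \<in> E" by (rule that)
    obtain a where a: "a < ?n" "es!a = e" using idx1[OF eE] by blast
    have "r * W e = (r * wa a) / m" by (simp add: W_def a(2)[symmetric] idx2[OF a(1)])
    also have "\<dots> \<le> (\<Sum>b<?n. hashimoto (es!b) (es!a) * p (es!b) * wa b) / m"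
      using sub[OF a(1)] m0 by (simp add: divide_right_mono)
    also have "\<dots> = (\<Sum>b<?n. hashimoto (es!b) e * (p (es!b) * W (es!b)))"
      unfolding sum_divide_distrib
      by (rule sum.cong[OF refl]) (simp add: W_def idx2 a(2))
    also have "\<dots> = (\<Sum>f\<in>E. hashimoto f e * (p f * W f))"
      by (rule sum.reindex_bij_betw[OF bij])
    finally show ?thesis .
  qed
  define T where "T = (\<Sum>f\<in>E. p f * W f)"
  have T0: "0 \<le> T" using pE W01 by (auto simp: T_def intro: sum_nonneg)
  have ST: "(\<Sum>f\<in>E. hashimoto f e * (p f * W f)) \<le> T" for e
    unfolding T_def by (rule sum_mono) (use pE W01 in \<open>auto simp: hashimoto_def\<close>)
  have r1: "r > 1" using vc(2) r_def by simp
  define eps where "eps = min 1 ((r - 1) / (1 + T))"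
  have eps0: "0 < eps" "eps \<le> 1" using r1 T0 by (auto simp: eps_def)
  have eps2: "eps * (1 + T) \<le> r - 1"
  proof -
    have "eps * (1 + T) \<le> ((r - 1) / (1 + T)) * (1 + T)"
      using T0 by (intro mult_right_mono) (auto simp: eps_def)
    also have "\<dots> = r - 1" using T0 by simp
    finally show ?thesis .
  qed
  define u where "u f = 1 - eps * W f" for f
  have u01: "0 \<le> u f \<and> u f \<le> 1" if "f \<in> E" for f
    using W01[OF that] eps0 by (auto simp: u_def mult_le_one)
  have Fu: "Fmap E p u e \<le> u e" if "e \<in> E" for e
  proof (cases e)
    case (Pair j i)
    define K where "K = in_nbrs E j - {i}"
    define aa where "aa k = eps * (p (k,j) * W (k,j))" for k
    have finK: "finite K" using finite_in_nbrs[OF finE] K_def by auto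
    have aa01: "\<forall>k\<in>K. 0 \<le> aa k \<and> aa k \<le> 1"
    proof
      fix k assume "k \<in> K"
      then have "k \<in> in_nbrs E j" unfolding K_def by simp
      then have kj: "(k,j) \<in> E" by (rule in_nbrsD)
      have h: "0 \<le> p (k,j)" "p (k,j) \<le> 1" using pE kj by auto
      have h2: "0 \<le> W (k,j)" "W (k,j) \<le> 1" using W01[OF kj] by auto
      have h3: "0 \<le> p (k,j) * W (k,j)" "p (k,j) * W (k,j) \<le> 1"
        using h h2 by (auto intro: mult_le_one mult_nonneg_nonneg)
      have "0 \<le> eps * (p (k,j) * W (k,j))" "eps * (p (k,j) * W (k,j)) \<le> 1"
        using h3 eps0 by (auto intro: mult_le_one mult_nonneg_nonneg)
      then show "0 \<le> aa k \<and> aa k \<le> 1" unfolding aa_def by simp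
    qed
    have F_eq: "Fmap E p u e = (\<Prod>k\<in>K. 1 - aa k)"
      unfolding Pair Fmap_def K_def aa_def u_def by (simp add: algebra_simps)
    define s where "s = (\<Sum>k\<in>K. aa k)"
    have s_eq: "s = eps * (\<Sum>f\<in>E. hashimoto f e * (p f * W f))"
      unfolding s_def aa_def Pair K_def by (simp add: hsum[OF finE] sum_distrib_left)
    from prod_bound[OF finK aa01] have pb: "Fmap E p u e * (1 + s) \<le> 1" by (simp add: F_eq s_def)
    have s0: "0 \<le> s" using aa01 unfolding s_def by (auto intro: sum_nonneg)
    have "s \<le> eps * T" unfolding s_eq using eps0 ST by (intro mult_left_mono) auto
    also have "\<dots> \<le> eps * (1 + T)" using eps0 by simp
    finally have sr: "1 + s \<le> r" using eps2 by simp
    have rW: "eps * W e * r \<le> s"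
    proof -
      have "eps * W e * r = eps * (r * W e)" by simp
      also have "\<dots> \<le> s" unfolding s_eq using subW[OF that] eps0 by (intro mult_left_mono) auto
      finally show ?thesis .
    qed
    have ew: "0 \<le> eps * W e" using eps0 W01[OF that] by simp
    have "eps * W e * (1 + s) \<le> eps * W e * r" using ew sr by (simp add: mult_left_mono)
    then have "1 \<le> u e * (1 + s)" using rW by (simp add: u_def algebra_simps)
    then have "Fmap E p u e * (1 + s) \<le> u e * (1 + s)" using pb by linarith
    then show ?thesis using s0 by (simp add: mult_le_cancel_right)
  qed
  define x where "x n = (Fmap E p ^^ n) (\<lambda>_. 0)" for n
  have xS: "x (Suc n) = Fmap E p (x n)" for n by (simp add: x_def)
  have inv: "\<forall>e\<in>E. 0 \<le> x n e \<and> x n e \<le> 1 \<and> x n e \<le> u e \<and> x n e \<le> x (Suc n) e" for n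
  proof (induction n)
    case 0
    show ?case
    proof
      fix e assume e: "e \<in> E"
      have "0 \<le> Fmap E p (x 0) e" using Fmap_range[OF pE, of "x 0" e] by (simp add: x_def)
      then show "0 \<le> x 0 e \<and> x 0 e \<le> 1 \<and> x 0 e \<le> u e \<and> x 0 e \<le> x (Suc 0) e"
        using u01[OF e] xS[of 0] by (simp add: x_def)
    qed
  next
    case (Suc n)
    show ?case
    proof
      fix e assume e: "e \<in> E"
      have r: "0 \<le> x (Suc n) e \<and> x (Suc n) e \<le> 1"
        using Fmap_range[OF pE, of "x n" e] Suc.IH unfolding xS by auto
      have "x (Suc n) e \<le> Fmap E p u e" unfolding xS
        by (rule Fmap_mono[OF pE]) (use Suc.IH in auto)
      also have "\<dots> \<le> u e" using Fu e .
      finally have r2: "x (Suc n) e \<le> u e" .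
      have "Fmap E p (x n) e \<le> Fmap E p (x (Suc n)) e"
        by (rule Fmap_mono[OF pE]) (use Suc.IH in auto)
      then have r3: "x (Suc n) e \<le> x (Suc (Suc n)) e" using xS[of n] xS[of "Suc n"] by simp
      show "0 \<le> x (Suc n) e \<and> x (Suc n) e \<le> 1 \<and> x (Suc n) e \<le> u e \<and> x (Suc n) e \<le> x (Suc (Suc n)) e"
        using r r2 r3 by auto
    qed
  qed
  define Q where "Q e = (SUP n. x n e)" for e
  have conv: "(\<lambda>n. x n e) \<longlonglongrightarrow> Q e" if "e \<in> E" for e
    unfolding Q_def
  proof (rule LIMSEQ_incseq_SUP)
    show "bdd_above (range (\<lambda>n. x n e))" using inv that by (intro bdd_aboveI[of _ 1]) auto
    show "incseq (\<lambda>n. x n e)" using inv that by (intro incseq_SucI) auto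
  qed
  have Qb: "0 \<le> Q e \<and> Q e \<le> u e" if "e \<in> E" for e
  proof
    show "0 \<le> Q e" using inv that by (intro LIMSEQ_le_const[OF conv[OF that]]) auto
    show "Q e \<le> u e" using inv that by (intro LIMSEQ_le_const2[OF conv[OF that]]) auto
  qed
  have fixQ: "Q e = Fmap E p Q e" if "e \<in> E" for e
  proof (cases e)
    case (Pair j i)
    have eqF: "Fmap E p y (j,i) = (\<Prod>k\<in>in_nbrs E j - {i}. 1 - p (k,j) + p (k,j) * y (k,j))" for y
      by (simp add: Fmap_def)
    have l1: "(\<lambda>n. x (Suc n) e) \<longlonglongrightarrow> Q e" using LIMSEQ_Suc[OF conv[OF that]] .
    have l2: "(\<lambda>n. Fmap E p (x n) e) \<longlonglongrightarrow> Fmap E p Q e"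
      unfolding Pair eqF
      by (intro tendsto_prod tendsto_intros conv in_nbrsD) auto
    show ?thesis using LIMSEQ_unique[OF l1] l2 xS by simp
  qed
  show ?thesis
  proof (intro exI[of _ Q] conjI ballI bexI[of _ "es!a0"])
    fix e assume "e \<in> E" then show "0 \<le> Q e" "Q e \<le> 1" using Qb[of e] u01[of e] by auto
  next
    fix e assume "e \<in> E" then show "Q e = Fmap E p Q e" by (rule fixQ)
  next
    show "es!a0 \<in> E" by (rule a0E)
    have "Q (es!a0) \<le> 1 - eps * W (es!a0)" using Qb[OF a0E] by (simp add: u_def)
    moreover have "0 < eps * W (es!a0)" using eps0 Wpos by simp
    ultimately show "Q (es!a0) \<noteq> 1" by linarith
  qed
qed

end
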